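(* Let $P$ be the feasible set of the rational mixed-integer program $\min\{c^Tx : Ax\le b,\ \ell\le x\le u,\ x_j\in\mathbb{Z} \text{ for all } j\in I\}$, where $A\in\mathbb{Q}^{m\times n}$, $c\in\mathbb{Q}^n$, $b\in\mathbb{Q}^m$, $\ell,u\in(\mathbb{Q}\cup\{\pm\infty\})^n$, $I\subseteq\{1,\dots,n\}$. Let $a^Tx\le \beta$ with $a\in\mathbb{Q}^n$, $\beta\in\mathbb{Q}$ be an inequality valid for $P$, and let $U,L\subseteq\{1,\dots,n\}$ be disjoint index sets such that $u_i<\infty$ for all $i\in U$, $\ell_i>-\infty$ for all $i\in L$, and $a_i=0$ for all $i\notin U\cup L$. Then the inequality $$\sum_{i\in U}\overline{a_i}\,x_i+\sum_{i\in L}\underline{a_i}\,x_i\;\le\;\overline{\beta+\sum_{i\in U,\,u_i>0}(\overline{a_i}-\underline{a_i})\,u_i+\sum_{i\in L,\,\ell_i<0}(\underline{a_i}-\overline{a_i})\,\ell_i}$$ is $\mathbb{F}$-representable and valid for $P$.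
   Context: An inequality is valid for $P$ if every point of $P$ satisfies it. $\mathbb{F}\subseteq\mathbb{Q}$ denotes a fixed set of floating-point numbers (e.g. IEEE double-precision numbers). For $x\in\mathbb{Q}$, $\overline{x}:=\min\{y\in\mathbb{F}: y>x\}$ and $\underline{x}:=\max\{y\in\mathbb{F}: y<x\}$ denote the upper and lower floating-point approximations of $x$ (assumed to exist for all numbers occurring). An inequality $a^Tx\le\beta$ is $\mathbb{F}$-representable if $a\in\mathbb{F}^n$ and $\beta\in\mathbb{F}$. *)

theory Defs
  imports Complex_Main
begin

text \<open>Vectors in Q^n / R^n are functions on nat, with indices 0..n-1 (instead of 1..n).
  Bounds: l j = None means l_j = -infinity, u j = None means u_j = +infinity.\<close>

definition mip_feasible ::
  "(nat \<Rightarrow> nat \<Rightarrow> rat) \<Rightarrow> (nat \<Rightarrow> rat) \<Rightarrow> (nat \<Rightarrow> rat option) \<Rightarrow> (nat \<Rightarrow> rat option)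
   \<Rightarrow> nat set \<Rightarrow> nat \<Rightarrow> nat \<Rightarrow> (nat \<Rightarrow> real) set" where
  "mip_feasible A b l u I m n =
     {x. (\<forall>k<m. (\<Sum>j<n. of_rat (A k j) * x j) \<le> of_rat (b k))
       \<and> (\<forall>j<n. (case l j of None \<Rightarrow> True | Some r \<Rightarrow> of_rat r \<le> x j)
               \<and> (case u j of None \<Rightarrow> True | Some r \<Rightarrow> x j \<le> of_rat r))
       \<and> (\<forall>j\<in>I. x j \<in> \<int>)
       \<and> (\<forall>j\<ge>n. x j = 0)}"

definition valid_for :: "(nat \<Rightarrow> real) set \<Rightarrow> nat \<Rightarrow> (nat \<Rightarrow> rat) \<Rightarrow> rat \<Rightarrow> bool" where
  "valid_for P n a \<beta> = (\<forall>x\<in>P. (\<Sum>i<n. of_rat (a i) * x i) \<le> of_rat \<beta>)"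

definition F_representable :: "rat set \<Rightarrow> nat \<Rightarrow> (nat \<Rightarrow> rat) \<Rightarrow> rat \<Rightarrow> bool" where
  "F_representable F n a \<beta> = ((\<forall>i<n. a i \<in> F) \<and> \<beta> \<in> F)"

definition fup :: "rat set \<Rightarrow> rat \<Rightarrow> rat" where
  "fup F x = (LEAST y. y \<in> F \<and> x < y)"

definition fdown :: "rat set \<Rightarrow> rat \<Rightarrow> rat" where
  "fdown F x = (GREATEST y. y \<in> F \<and> y < x)"

definition has_fup :: "rat set \<Rightarrow> rat \<Rightarrow> bool" where
  "has_fup F x = (\<exists>y. y \<in> F \<and> x < y \<and> (\<forall>z. z \<in> F \<and> x < z \<longrightarrow> y \<le> z))"

definition has_fdown :: "rat set \<Rightarrow> rat \<Rightarrow> bool" where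
  "has_fdown F x = (\<exists>y. y \<in> F \<and> y < x \<and> (\<forall>z. z \<in> F \<and> z < x \<longrightarrow> z \<le> y))"

definition safe_coeff :: "rat set \<Rightarrow> nat set \<Rightarrow> nat set \<Rightarrow> (nat \<Rightarrow> rat) \<Rightarrow> nat \<Rightarrow> rat" where
  "safe_coeff F U L a i =
     (if i \<in> U then fup F (a i) else if i \<in> L then fdown F (a i) else 0)"

definition safe_rhs_arg ::
  "rat set \<Rightarrow> nat set \<Rightarrow> nat set \<Rightarrow> (nat \<Rightarrow> rat) \<Rightarrow> rat \<Rightarrow> (nat \<Rightarrow> rat option) \<Rightarrow> (nat \<Rightarrow> rat option) \<Rightarrow> rat" where
  "safe_rhs_arg F U L a \<beta> l u =
     \<beta> + (\<Sum>i\<in>{i\<in>U. the (u i) > 0}. (fup F (a i) - fdown F (a i)) * the (u i))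
       + (\<Sum>i\<in>{i\<in>L. the (l i) < 0}. (fdown F (a i) - fup F (a i)) * the (l i))"

end

theory Submission
  imports Defs
begin

lemma fup_prop: "has_fup F x \<Longrightarrow> fup F x \<in> F \<and> x < fup F x"
proof -
  assume "has_fup F x"
  then obtain y where y: "y \<in> F" "x < y" "\<forall>z. z \<in> F \<and> x < z \<longrightarrow> y \<le> z"
    unfolding has_fup_def by blast
  have "fup F x = y" unfolding fup_def
    by (rule Least_equality) (use y in auto)
  with y show ?thesis by simp
qed

lemma fdown_prop: "has_fdown F x \<Longrightarrow> fdown F x \<in> F \<and> fdown F x < x"
proof -
  assume "has_fdown F x"
  then obtain y where y: "y \<in> F" "y < x" "\<forall>z. z \<in> F \<and> z < x \<longrightarrow> z \<le> y"
    unfolding has_fdown_def by blast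
  have "fdown F x = y" unfolding fdown_def
    by (rule Greatest_equality) (use y in auto)
  with y show ?thesis by simp
qed

lemma hU: fixes dn a up x r :: real
  assumes "dn < a" "a < up" "x \<le> r"
  shows "up*x \<le> a*x + (if r>0 then (up-dn)*r else 0)"
proof -
  have 1: "(up-a)*(r-x) \<ge> 0" using assms by simp
  show ?thesis
  proof (cases "r > 0")
    case True
    have h1: "dn*r < a*r" using True assms by (simp add: mult_strict_right_mono)
    have h2: "up*x + a*r \<le> a*x + up*r" using 1 by (simp add: algebra_simps)
    have e: "(up-dn)*r = up*r - dn*r" by (simp add: algebra_simps)
    have "up*x \<le> a*x + (up-dn)*r" using h1 h2 e by linarith
    then show ?thesis using True by simp
  next
    case False
    have "(up-a)*r \<le> 0" using False assms by (simp add: mult_nonneg_nonpos)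
    then show ?thesis using 1 False by (simp add: algebra_simps)
  qed
qed

lemma hL: fixes dn a up x r :: real
  assumes "dn < a" "a < up" "r \<le> x"
  shows "dn*x \<le> a*x + (if r<0 then (dn-up)*r else 0)"
proof -
  have 1: "(a-dn)*(x-r) \<ge> 0" using assms by simp
  show ?thesis
  proof (cases "r < 0")
    case True
    have h1: "up*r < a*r" using mult_strict_right_mono_neg[OF assms(2) True] by simp
    have h2: "dn*x + a*r \<le> a*x + dn*r" using 1 by (simp add: algebra_simps)
    have e: "(dn-up)*r = dn*r - up*r" by (simp add: algebra_simps)
    have "dn*x \<le> a*x + (dn-up)*r" using h1 h2 e by linarith
    then show ?thesis using True by simp
  next
    case False
    have "(a-dn)*r \<ge> 0" using False assms by simp
    then show ?thesis using 1 False by (simp add: algebra_simps)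
  qed
qed

theorem lemma1:
  fixes F :: "rat set" and A :: "nat \<Rightarrow> nat \<Rightarrow> rat" and b :: "nat \<Rightarrow> rat"
    and c :: "nat \<Rightarrow> rat"
    and l u :: "nat \<Rightarrow> rat option" and I U L :: "nat set" and m n :: nat
    and a :: "nat \<Rightarrow> rat" and \<beta> :: rat
  assumes zero_F: "0 \<in> F"
    and I_sub: "I \<subseteq> {..<n}"
    and valid: "valid_for (mip_feasible A b l u I m n) n a \<beta>"
    and U_sub: "U \<subseteq> {..<n}" and L_sub: "L \<subseteq> {..<n}"
    and disj: "U \<inter> L = {}"
    and u_fin: "\<forall>i\<in>U. u i \<noteq> None"
    and l_fin: "\<forall>i\<in>L. l i \<noteq> None"
    and a_zero: "\<forall>i<n. i \<notin> U \<union> L \<longrightarrow> a i = 0"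
    and ex_coeff: "\<forall>i\<in>U \<union> L. has_fup F (a i) \<and> has_fdown F (a i)"
    and ex_rhs: "has_fup F (safe_rhs_arg F U L a \<beta> l u)"
  shows "F_representable F n (safe_coeff F U L a) (fup F (safe_rhs_arg F U L a \<beta> l u))
       \<and> valid_for (mip_feasible A b l u I m n) n (safe_coeff F U L a)
           (fup F (safe_rhs_arg F U L a \<beta> l u))"
proof
  show "F_representable F n (safe_coeff F U L a) (fup F (safe_rhs_arg F U L a \<beta> l u))"
    unfolding F_representable_def safe_coeff_def
    using fup_prop[OF ex_rhs] ex_coeff fup_prop fdown_prop zero_F by auto
next
  define d1 where "d1 i = (if i \<in> {i\<in>U. the (u i) > 0} then (fup F (a i) - fdown F (a i)) * the (u i) else 0)" for i
  define d2 where "d2 i = (if i \<in> {i\<in>L. the (l i) < 0} then (fdown F (a i) - fup F (a i)) * the (l i) else 0)" for i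
  have s1: "sum d1 {..<n} = (\<Sum>i\<in>{i\<in>U. the (u i) > 0}. (fup F (a i) - fdown F (a i)) * the (u i))"
    unfolding d1_def by (subst sum.inter_restrict[symmetric]) (use U_sub in \<open>auto intro!: sum.cong\<close>)
  have s2: "sum d2 {..<n} = (\<Sum>i\<in>{i\<in>L. the (l i) < 0}. (fdown F (a i) - fup F (a i)) * the (l i))"
    unfolding d2_def by (subst sum.inter_restrict[symmetric]) (use L_sub in \<open>auto intro!: sum.cong\<close>)
  have arg: "safe_rhs_arg F U L a \<beta> l u = \<beta> + (\<Sum>i<n. d1 i + d2 i)"
    unfolding safe_rhs_arg_def sum.distrib s1 s2 by simp
  show "valid_for (mip_feasible A b l u I m n) n (safe_coeff F U L a)
           (fup F (safe_rhs_arg F U L a \<beta> l u))"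
    unfolding valid_for_def
  proof
    fix x assume xP: "x \<in> mip_feasible A b l u I m n"
    have va: "(\<Sum>i<n. of_rat (a i) * x i) \<le> real_of_rat \<beta>"
      using valid xP unfolding valid_for_def by blast
    have pt: "of_rat (safe_coeff F U L a i) * x i \<le> of_rat (a i) * x i + of_rat (d1 i + d2 i)"
      if i: "i < n" for i
    proof -
      have bnd: "(case l i of None \<Rightarrow> True | Some r \<Rightarrow> of_rat r \<le> x i)
               \<and> (case u i of None \<Rightarrow> True | Some r \<Rightarrow> x i \<le> of_rat r)"
        using xP i unfolding mip_feasible_def by blast
      consider "i \<in> U" | "i \<in> L" | "i \<notin> U \<union> L" by blast
      then show ?thesis
      proof cases
        case 1
        then obtain r where r: "u i = Some r" using u_fin by auto
        have xr: "x i \<le> of_rat r" using bnd r by simp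
        have fu: "a i < fup F (a i)" and fd: "fdown F (a i) < a i"
          using ex_coeff 1 fup_prop fdown_prop by auto
        have "i \<notin> L" using 1 disj by auto
        then have "d1 i + d2 i = (if r > 0 then (fup F (a i) - fdown F (a i)) * r else 0)"
          unfolding d1_def d2_def using 1 r by auto
        moreover have "of_rat (fup F (a i)) * x i \<le> of_rat (a i) * x i
            + (if of_rat r > (0::real) then (of_rat (fup F (a i)) - of_rat (fdown F (a i))) * of_rat r else 0)"
          by (rule hU) (use fu fd xr in \<open>auto simp: of_rat_less\<close>)
        ultimately show ?thesis using 1
          by (simp add: safe_coeff_def of_rat_mult of_rat_diff of_rat_less_0_iff[symmetric] split: if_splits)
      next
        case 2
        then obtain r where r: "l i = Some r" using l_fin by auto
        have xr: "of_rat r \<le> x i" using bnd r by simp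
        have fu: "a i < fup F (a i)" and fd: "fdown F (a i) < a i"
          using ex_coeff 2 fup_prop fdown_prop by auto
        have "i \<notin> U" using 2 disj by auto
        then have "d1 i + d2 i = (if r < 0 then (fdown F (a i) - fup F (a i)) * r else 0)"
          unfolding d1_def d2_def using 2 r by auto
        moreover have "of_rat (fdown F (a i)) * x i \<le> of_rat (a i) * x i
            + (if of_rat r < (0::real) then (of_rat (fdown F (a i)) - of_rat (fup F (a i))) * of_rat r else 0)"
          by (rule hL) (use fu fd xr in \<open>auto simp: of_rat_less\<close>)
        ultimately show ?thesis using 2 \<open>i \<notin> U\<close>
          by (simp add: safe_coeff_def of_rat_mult of_rat_diff split: if_splits)
      next
        case 3
        then show ?thesis using a_zero i unfolding safe_coeff_def d1_def d2_def by auto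
      qed
    qed
    have "(\<Sum>i<n. of_rat (safe_coeff F U L a i) * x i)
        \<le> (\<Sum>i<n. of_rat (a i) * x i + of_rat (d1 i + d2 i))"
      by (rule sum_mono) (use pt in auto)
    also have "\<dots> = (\<Sum>i<n. of_rat (a i) * x i) + of_rat (\<Sum>i<n. d1 i + d2 i)"
      by (simp add: sum.distrib of_rat_sum of_rat_add)
    also have "\<dots> \<le> of_rat (safe_rhs_arg F U L a \<beta> l u)"
      using va unfolding arg by (simp add: of_rat_add)
    also have "\<dots> < of_rat (fup F (safe_rhs_arg F U L a \<beta> l u))"
      using fup_prop[OF ex_rhs] by (simp add: of_rat_less)
    finally show "(\<Sum>i<n. of_rat (safe_coeff F U L a i) * x i)
        \<le> of_rat (fup F (safe_rhs_arg F U L a \<beta> l u))" by simp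
  qed
qed

end
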